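(* Let $n\ge2$, $N=\binom n2$ and $1\le M\le N-1$. Let $H$ be the graph whose vertices are the labeled graphs on $[n]$ with exactly $M$ edges, two graphs being adjacent iff one is obtained from the other by replacing one edge by one non-edge, and let $m_G(G')=\frac{1}{M(N-M)+1}$ if $G'=G$ or $G'$ is adjacent to $G$ in $H$, and $0$ otherwise. Then for all distinct $G_1,G_2\in V(H)$, \[\kappa(G_1,G_2)\ge\frac{N}{M(N-M)+1}.\]
   Context: For a graph $H$ with random walk $m$ (each $m_x$ a probability distribution supported on $x$ and its neighbors), $d$ the graph distance on $H$, the transportation distance is $W(m_1,m_2)=\inf_A\sum_{x,y}A(x,y)d(x,y)$ over couplings $A$ of $m_1,m_2$ (i.e. $\sum_yA(x,y)=m_1(x)$, $\sum_xA(x,y)=m_2(y)$), and the Ollivier Ricci curvature is $\kappa(x,y)=1-W(m_x,m_y)/d(x,y)$. *)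

theory Defs
  imports "HOL-Analysis.Analysis"
begin

fun walk :: "'v set \<Rightarrow> ('v \<Rightarrow> 'v \<Rightarrow> bool) \<Rightarrow> nat \<Rightarrow> 'v \<Rightarrow> 'v \<Rightarrow> bool" where
  "walk V adj 0 x y \<longleftrightarrow> x \<in> V \<and> x = y"
| "walk V adj (Suc k) x y \<longleftrightarrow> x \<in> V \<and> (\<exists>z\<in>V. adj x z \<and> walk V adj k z y)"

definition gdist :: "'v set \<Rightarrow> ('v \<Rightarrow> 'v \<Rightarrow> bool) \<Rightarrow> 'v \<Rightarrow> 'v \<Rightarrow> nat" where
  "gdist V adj x y = (LEAST k. walk V adj k x y)"

definition couplings :: "'v set \<Rightarrow> ('v \<Rightarrow> real) \<Rightarrow> ('v \<Rightarrow> real) \<Rightarrow> ('v \<Rightarrow> 'v \<Rightarrow> real) set" where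
  "couplings V mu1 mu2 = {A. (\<forall>x\<in>V. \<forall>y\<in>V. A x y \<ge> 0)
       \<and> (\<forall>x\<in>V. (\<Sum>y\<in>V. A x y) = mu1 x)
       \<and> (\<forall>y\<in>V. (\<Sum>x\<in>V. A x y) = mu2 y)}"

definition transport_dist :: "'v set \<Rightarrow> ('v \<Rightarrow> 'v \<Rightarrow> bool) \<Rightarrow> ('v \<Rightarrow> real) \<Rightarrow> ('v \<Rightarrow> real) \<Rightarrow> real" where
  "transport_dist V adj mu1 mu2 =
     Inf ((\<lambda>A. \<Sum>x\<in>V. \<Sum>y\<in>V. A x y * real (gdist V adj x y)) ` couplings V mu1 mu2)"

definition ollivier_ricci :: "'v set \<Rightarrow> ('v \<Rightarrow> 'v \<Rightarrow> bool) \<Rightarrow> ('v \<Rightarrow> 'v \<Rightarrow> real) \<Rightarrow> 'v \<Rightarrow> 'v \<Rightarrow> real" where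
  "ollivier_ricci V adj m x y =
     1 - transport_dist V adj (m x) (m y) / real (gdist V adj x y)"

(* The specific graph H: labeled graphs on [n] = {0..<n} with exactly M edges,
   a graph being represented by its edge set (a set of 2-subsets of {0..<n}). *)
definition all_edges :: "nat \<Rightarrow> nat set set" where
  "all_edges n = {e. e \<subseteq> {0..<n} \<and> card e = 2}"

definition graphs_M :: "nat \<Rightarrow> nat \<Rightarrow> nat set set set" where
  "graphs_M n M = {G. G \<subseteq> all_edges n \<and> card G = M}"

definition switch_adj :: "nat \<Rightarrow> nat set set \<Rightarrow> nat set set \<Rightarrow> bool" where
  "switch_adj n G G' \<longleftrightarrow> (\<exists>e\<in>G. \<exists>f\<in>all_edges n - G. G' = insert f (G - {e}))"

definition switch_walk :: "nat \<Rightarrow> nat \<Rightarrow> nat set set \<Rightarrow> nat set set \<Rightarrow> real" where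
  "switch_walk n M G G' =
     (if G' = G \<or> switch_adj n G G' then 1 / (real M * (real (n choose 2) - real M) + 1) else 0)"

end

theory Submission
  imports Defs
begin



lemma fin_E: "finite (all_edges n)"
  unfolding all_edges_def by (rule finite_subset[of _ "Pow {0..<n}"]) auto

lemma card_E: "card (all_edges n) = n choose 2"
  unfolding all_edges_def using n_subsets[of "{0..<n}" 2] by simp

lemma finV: "finite (graphs_M n M)"
  unfolding graphs_M_def by (rule finite_subset[of _ "Pow (all_edges n)"]) (auto simp: fin_E)

lemma finG: "G \<in> graphs_M n M \<Longrightarrow> finite G"
  unfolding graphs_M_def using fin_E finite_subset by blast

lemma adj_in:
  assumes x: "x \<in> graphs_M n M" and a: "switch_adj n x u"
  shows "u \<in> graphs_M n M"
proof -
  from a obtain e f where e: "e \<in> x" and f: "f \<in> all_edges n" "f \<notin> x" and u: "u = insert f (x - {e})"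
    unfolding switch_adj_def by auto
  have fx: "finite x" using finG[OF x] .
  have "card u = card (x - {e}) + 1" using u f fx by (simp add: card_insert_if)
  also have "\<dots> = card x" using e fx
    by (metis One_nat_def Suc_pred card_Diff_singleton card_gt_0_iff empty_iff add.commute plus_1_eq_Suc)
  finally have "card u = M" using x unfolding graphs_M_def by simp
  moreover have "u \<subseteq> all_edges n" using x u f unfolding graphs_M_def by auto
  ultimately show ?thesis unfolding graphs_M_def by simp
qed

lemma card_diff_sym:
  assumes "x \<in> graphs_M n M" "y \<in> graphs_M n M"
  shows "card (x - y) = card (y - x)"
proof -
  have "finite x" "finite y" using assms finG by auto
  then show ?thesis using assms card_Diff_subset_Int[of x y] card_Diff_subset_Int[of y x]
    unfolding graphs_M_def by (simp add: Int_commute)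
qed

lemma step:
  assumes x: "x \<in> graphs_M n M" and y: "y \<in> graphs_M n M" and c: "card (x - y) = Suc k"
  shows "\<exists>a b. a \<in> x - y \<and> b \<in> y - x \<and> insert b (x - {a}) \<in> graphs_M n M
     \<and> switch_adj n x (insert b (x - {a})) \<and> card (insert b (x - {a}) - y) = k
     \<and> card (x - insert b (x - {a})) = 1"
proof -
  have fx: "finite x" "finite y" using x y finG by auto
  obtain a where a: "a \<in> x - y" using c by (metis card.empty ex_in_conv nat.distinct(1))
  have "card (y - x) = Suc k" using card_diff_sym[OF x y] c by simp
  then obtain b where b: "b \<in> y - x" by (metis card.empty ex_in_conv nat.distinct(1))
  have bE: "b \<in> all_edges n" using b y unfolding graphs_M_def by auto
  have adj: "switch_adj n x (insert b (x - {a}))" unfolding switch_adj_def using a b bE by blast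
  have "insert b (x - {a}) - y = (x - y) - {a}" using a b by auto
  hence "card (insert b (x - {a}) - y) = k" using c a fx by simp
  moreover have "x - insert b (x - {a}) = {a}" using a b by auto
  ultimately show ?thesis using a b adj adj_in[OF x adj] by (intro exI[of _ a] exI[of _ b]) simp
qed

lemma walk_exists:
  "x \<in> graphs_M n M \<Longrightarrow> y \<in> graphs_M n M \<Longrightarrow> card (x - y) = k
   \<Longrightarrow> walk (graphs_M n M) (switch_adj n) k x y"
proof (induction k arbitrary: x)
  case 0
  then have "x \<subseteq> y" using finG by (metis Diff_eq_empty_iff card_0_eq finite_Diff)
  moreover have "card x = card y" using 0 unfolding graphs_M_def by auto
  ultimately have "x = y" using finG[OF 0(2)] by (simp add: card_subset_eq)
  then show ?case using 0 by simp
next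
  case (Suc k)
  from step[OF Suc.prems] obtain a b where
    h: "insert b (x - {a}) \<in> graphs_M n M" "switch_adj n x (insert b (x - {a}))"
       "card (insert b (x - {a}) - y) = k" by blast
  show ?case using Suc.IH[OF h(1) Suc.prems(2) h(3)] h Suc.prems by auto
qed

lemma walk_lower:
  "walk (graphs_M n M) (switch_adj n) k x y \<Longrightarrow> card (x - y) \<le> k"
proof (induction k arbitrary: x)
  case 0
  then show ?case by simp
next
  case (Suc k)
  then obtain z where z: "z \<in> graphs_M n M" "switch_adj n x z" "walk (graphs_M n M) (switch_adj n) k z y"
    by auto
  from z(2) obtain e f where zz: "z = insert f (x - {e})" unfolding switch_adj_def by auto
  have "x - y \<subseteq> insert e (z - y)" using zz by auto
  moreover have "finite (insert e (z - y))" using finG[OF z(1)] by simp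
  ultimately have "card (x - y) \<le> card (insert e (z - y))" by (rule card_mono[rotated])
  also have "\<dots> \<le> Suc (card (z - y))" using finG[OF z(1)] by (simp add: card_insert_if)
  finally show ?case using Suc.IH[OF z(3)] by simp
qed

lemma gdist_eq:
  assumes "x \<in> graphs_M n M" "y \<in> graphs_M n M"
  shows "gdist (graphs_M n M) (switch_adj n) x y = card (x - y)"
  unfolding gdist_def
  by (rule Least_equality) (auto intro: walk_exists[OF assms] walk_lower)



definition ccost :: "'v set \<Rightarrow> ('v \<Rightarrow> 'v \<Rightarrow> real) \<Rightarrow> ('v \<Rightarrow> 'v \<Rightarrow> real) \<Rightarrow> real" where
  "ccost V d A = (\<Sum>x\<in>V. \<Sum>y\<in>V. A x y * d x y)"

lemma glue:
  assumes fin: "finite V" and A: "A \<in> couplings V m1 m2" and B: "B \<in> couplings V m2 m3"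
    and tri: "\<And>x y z. x \<in> V \<Longrightarrow> y \<in> V \<Longrightarrow> z \<in> V \<Longrightarrow> d x z \<le> d x y + d y z"
  shows "\<exists>C\<in>couplings V m1 m3. ccost V d C \<le> ccost V d A + ccost V d B"
proof -
  have An: "\<And>x y. x \<in> V \<Longrightarrow> y \<in> V \<Longrightarrow> A x y \<ge> 0"
    and rA: "\<And>x. x \<in> V \<Longrightarrow> (\<Sum>y\<in>V. A x y) = m1 x"
    and cA: "\<And>y. y \<in> V \<Longrightarrow> (\<Sum>x\<in>V. A x y) = m2 y"
    using A unfolding couplings_def by auto
  have Bn: "\<And>x y. x \<in> V \<Longrightarrow> y \<in> V \<Longrightarrow> B x y \<ge> 0"
    and rB: "\<And>x. x \<in> V \<Longrightarrow> (\<Sum>y\<in>V. B x y) = m2 x"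
    and cB: "\<And>y. y \<in> V \<Longrightarrow> (\<Sum>x\<in>V. B x y) = m3 y"
    using B unfolding couplings_def by auto
  have m2n: "\<And>y. y \<in> V \<Longrightarrow> m2 y \<ge> 0" using cA An by (metis sum_nonneg)
  have Az: "A x y = 0" if "x \<in> V" "y \<in> V" "m2 y = 0" for x y
    using sum_nonneg_eq_0_iff[OF fin, of "\<lambda>x. A x y"] An that cA by auto
  have Bz: "B y z = 0" if "z \<in> V" "y \<in> V" "m2 y = 0" for z y
    using sum_nonneg_eq_0_iff[OF fin, of "\<lambda>z. B y z"] Bn that rB by auto
  define w where "w x y z = A x y * B y z / m2 y" for x y z
  have wn: "w x y z \<ge> 0" if "x \<in> V" "y \<in> V" "z \<in> V" for x y z
    unfolding w_def using An Bn m2n that by simp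
  have k1: "(\<Sum>z\<in>V. w x y z) = A x y" if "x \<in> V" "y \<in> V" for x y
  proof -
    have "(\<Sum>z\<in>V. w x y z) = A x y * (\<Sum>z\<in>V. B y z) / m2 y"
      unfolding w_def by (simp add: sum_distrib_left sum_divide_distrib)
    also have "\<dots> = A x y" using rB[OF that(2)] Az[OF that] by (cases "m2 y = 0") auto
    finally show ?thesis .
  qed
  have k2: "(\<Sum>x\<in>V. w x y z) = B y z" if "z \<in> V" "y \<in> V" for z y
  proof -
    have "(\<Sum>x\<in>V. w x y z) = (\<Sum>x\<in>V. A x y) * B y z / m2 y"
      unfolding w_def by (simp add: sum_distrib_right sum_divide_distrib)
    also have "\<dots> = B y z" using cA[OF that(2)] Bz[OF that] by (cases "m2 y = 0") auto
    finally show ?thesis .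
  qed
  define C where "C x z = (\<Sum>y\<in>V. w x y z)" for x z
  have "C \<in> couplings V m1 m3"
    unfolding couplings_def
  proof (intro CollectI conjI ballI)
    fix x z assume "x \<in> V" "z \<in> V"
    then show "C x z \<ge> 0" unfolding C_def by (intro sum_nonneg) (simp add: wn)
  next
    fix x assume x: "x \<in> V"
    have "(\<Sum>z\<in>V. C x z) = (\<Sum>y\<in>V. \<Sum>z\<in>V. w x y z)" unfolding C_def by (rule sum.swap)
    also have "\<dots> = (\<Sum>y\<in>V. A x y)" using k1 x by simp
    finally show "(\<Sum>z\<in>V. C x z) = m1 x" using rA x by simp
  next
    fix z assume z: "z \<in> V"
    have "(\<Sum>x\<in>V. C x z) = (\<Sum>y\<in>V. \<Sum>x\<in>V. w x y z)" unfolding C_def by (rule sum.swap)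
    also have "\<dots> = (\<Sum>y\<in>V. B y z)" using k2 z by simp
    finally show "(\<Sum>x\<in>V. C x z) = m3 z" using cB z by simp
  qed
  moreover have "ccost V d C \<le> ccost V d A + ccost V d B"
  proof -
    have "ccost V d C = (\<Sum>x\<in>V. \<Sum>z\<in>V. \<Sum>y\<in>V. w x y z * d x z)"
      unfolding ccost_def C_def by (simp add: sum_distrib_right)
    also have "\<dots> \<le> (\<Sum>x\<in>V. \<Sum>z\<in>V. \<Sum>y\<in>V. w x y z * d x y + w x y z * d y z)"
      by (intro sum_mono) (auto simp: wn tri distrib_left[symmetric] intro!: mult_left_mono)
    also have "\<dots> = (\<Sum>x\<in>V. \<Sum>z\<in>V. \<Sum>y\<in>V. w x y z * d x y)
                   + (\<Sum>x\<in>V. \<Sum>z\<in>V. \<Sum>y\<in>V. w x y z * d y z)"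
      by (simp add: sum.distrib)
    also have "(\<Sum>x\<in>V. \<Sum>z\<in>V. \<Sum>y\<in>V. w x y z * d x y) = (\<Sum>x\<in>V. \<Sum>y\<in>V. \<Sum>z\<in>V. w x y z * d x y)"
      by (rule sum.cong[OF refl], rule sum.swap)
    also have "\<dots> = (\<Sum>x\<in>V. \<Sum>y\<in>V. (\<Sum>z\<in>V. w x y z) * d x y)"
      by (simp add: sum_distrib_right)
    also have "\<dots> = ccost V d A" unfolding ccost_def using k1 by simp
    also have "(\<Sum>x\<in>V. \<Sum>z\<in>V. \<Sum>y\<in>V. w x y z * d y z) = (\<Sum>z\<in>V. \<Sum>x\<in>V. \<Sum>y\<in>V. w x y z * d y z)"
      by (rule sum.swap)
    also have "\<dots> = (\<Sum>z\<in>V. \<Sum>y\<in>V. \<Sum>x\<in>V. w x y z * d y z)"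
      by (rule sum.cong[OF refl], rule sum.swap)
    also have "\<dots> = (\<Sum>z\<in>V. \<Sum>y\<in>V. (\<Sum>x\<in>V. w x y z) * d y z)"
      by (simp add: sum_distrib_right)
    also have "\<dots> = (\<Sum>z\<in>V. \<Sum>y\<in>V. B y z * d y z)" using k2 by simp
    also have "\<dots> = ccost V d B" unfolding ccost_def by (rule sum.swap)
    finally show ?thesis by simp
  qed
  ultimately show ?thesis by blast
qed



definition nb :: "nat \<Rightarrow> nat \<Rightarrow> nat set set \<Rightarrow> nat set set set" where
  "nb n M x = {u \<in> graphs_M n M. u = x \<or> switch_adj n x u}"

lemma nb_sub: "nb n M x \<subseteq> graphs_M n M" unfolding nb_def by auto

lemma sadjI: "e \<in> G \<Longrightarrow> f \<in> all_edges n \<Longrightarrow> f \<notin> G \<Longrightarrow> G' = insert f (G - {e}) \<Longrightarrow> switch_adj n G G'"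
  unfolding switch_adj_def by blast

lemma nbI: "u \<in> graphs_M n M \<Longrightarrow> switch_adj n x u \<Longrightarrow> u \<in> nb n M x"
  unfolding nb_def by blast

lemma nb_self: "x \<in> graphs_M n M \<Longrightarrow> x \<in> nb n M x"
  unfolding nb_def by blast

lemma nb_diff:
  assumes "w \<in> nb n M x" shows "\<exists>f. w - x \<subseteq> {f}"
  using assms unfolding nb_def switch_adj_def by auto

lemma kl:
  assumes x: "x \<in> graphs_M n M" and y: "y \<in> graphs_M n M"
    and xy: "x - y = {a}" and yx: "y - x = {b}"
    and u: "u \<in> nb n M x" "u \<notin> nb n M y"
  shows "a \<in> u \<and> b \<notin> u \<and> insert b (u - {a}) \<in> nb n M y \<and> insert b (u - {a}) \<notin> nb n M x
     \<and> (\<exists>e f. e \<in> x \<and> e \<noteq> a \<and> f \<in> all_edges n - insert b x \<and> u = insert f (x - {e}))"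
proof -
  have ax: "a \<in> x" "a \<notin> y" and bx: "b \<in> y" "b \<notin> x" using xy yx by auto
  have yeq: "\<And>t. t \<in> y \<longleftrightarrow> (t \<in> x \<and> t \<noteq> a) \<or> t = b" using xy yx by blast
  have aE: "a \<in> all_edges n" using x ax unfolding graphs_M_def by auto
  have bE: "b \<in> all_edges n" using y bx unfolding graphs_M_def by auto
  have ab: "a \<noteq> b" using ax bx by auto
  have Seq: "x - {a} = y - {b}" using bx(2) by (intro set_eqI) (simp add: yeq, metis)
  have yins: "y = insert b (x - {a})" by (intro set_eqI) (simp add: yeq, metis)
  have xnby: "x \<in> nb n M y"
  proof -
    have "x = insert a (y - {b})" using yeq ab ax bx by blast
    then have "switch_adj n y x" using aE ax bx by (intro sadjI[of b]) auto
    then show ?thesis using x nbI by blast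
  qed
  have unx: "u \<noteq> x" using u xnby by auto
  then obtain e f where e: "e \<in> x" and f: "f \<in> all_edges n" "f \<notin> x" and ueq: "u = insert f (x - {e})"
    using u(1) unx unfolding nb_def switch_adj_def by auto
  have uV: "u \<in> graphs_M n M" using u nb_sub by blast
  have ea: "e \<noteq> a"
  proof
    assume [simp]: "e = a"
    show False
    proof (cases "f = b")
      case True
      then have "u = y" using ueq yins by simp
      then show False using u(2) nb_self[OF y] by simp
    next
      case False
      have "u = insert f (y - {b})" using ueq Seq by simp
      moreover have "f \<notin> y" using f(2) False by (simp add: yeq)
      ultimately have "switch_adj n y u" using f bx by (intro sadjI[of b]) auto
      then show False using u(2) uV nbI by blast
    qed
  qed
  have ae: "a \<noteq> e" using ea by metis
  have be: "b \<noteq> e" using e bx(2) by metis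
  have fa: "f \<noteq> a" using f(2) ax(1) by metis
  have ey: "e \<in> y" using e ea by (simp add: yeq)
  have fb: "f \<noteq> b"
  proof
    assume fb0: "f = b"
    have "u = insert a (y - {e})" using ueq ea ae e be ax(1) fb0
      by (intro set_eqI) (simp add: yeq, metis)
    then have "switch_adj n y u" using aE ax ey by (intro sadjI[of e]) simp_all
    then show False using u(2) uV nbI by blast
  qed
  have bf: "b \<noteq> f" using fb by metis
  have au: "a \<in> u" "b \<notin> u" using ueq ae ax(1) bf bx(2) by simp_all
  define v where "v = insert b (u - {a})"
  have veq: "v = insert f (y - {e})" unfolding v_def using ueq ea ae fa be
    by (intro set_eqI) (simp add: yeq, metis)
  have fy: "f \<notin> y" using f(2) fb by (simp add: yeq)
  have sa: "switch_adj n y v" using veq ey f fy by (intro sadjI[of e]) simp_all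
  have vnby: "v \<in> nb n M y" using adj_in[OF y sa] sa nbI by blast
  have vnbx: "v \<notin> nb n M x"
  proof
    assume "v \<in> nb n M x"
    then obtain g where g: "v - x \<subseteq> {g}" using nb_diff by blast
    have "b \<in> v" unfolding v_def by simp
    moreover have "f \<in> v" using veq by simp
    ultimately have "b \<in> v - x" "f \<in> v - x" using bx(2) f(2) by simp_all
    then have "b = g" "f = g" using g by blast+
    then show False using fb by simp
  qed
  have fE: "f \<in> all_edges n - insert b x" using f fb by simp
  show ?thesis unfolding v_def[symmetric]
    using au vnby vnbx e ea fE ueq by blast
qed



definition pp :: "nat \<Rightarrow> nat \<Rightarrow> real" where
  "pp n M = 1 / (real M * (real (n choose 2) - real M) + 1)"

definition dd :: "nat set set \<Rightarrow> nat set set \<Rightarrow> real" where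
  "dd u v = real (card (u - v))"

lemma sw_eq: "u \<in> graphs_M n M \<Longrightarrow> switch_walk n M x u = (if u \<in> nb n M x then pp n M else 0)"
  unfolding switch_walk_def nb_def pp_def by simp

lemma restrict_sum:
  assumes "finite V" "B \<subseteq> V"
  shows "(\<Sum>u\<in>V. if u \<in> B then g u else 0) = (\<Sum>u\<in>B. g u)"
  using sum.inter_restrict[OF assms(1), of g B, symmetric] assms(2)
  by (simp add: Int_absorb1)

lemma adj_coupling:
  assumes x: "x \<in> graphs_M n M" and y: "y \<in> graphs_M n M" and c1: "card (x - y) = 1"
  shows "\<exists>A\<in>couplings (graphs_M n M) (switch_walk n M x) (switch_walk n M y).
           ccost (graphs_M n M) dd A \<le> real ((M - 1) * ((n choose 2) - (M + 1))) * pp n M"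
proof -
  let ?V = "graphs_M n M"
  let ?p = "pp n M"
  obtain a where xy: "x - y = {a}" using c1 card_1_singletonE by blast
  have "card (y - x) = 1" using c1 card_diff_sym[OF x y] by simp
  then obtain b where yx: "y - x = {b}" using card_1_singletonE by blast
  have ax: "a \<in> x" "a \<notin> y" and bx: "b \<in> y" "b \<notin> x" using xy yx by auto
  have ab: "a \<noteq> b" using ax bx by metis
  have fx: "finite x" using finG[OF x] .
  have cx: "card x = M" and xE: "x \<subseteq> all_edges n" using x unfolding graphs_M_def by auto
  have bE: "b \<in> all_edges n" using y bx unfolding graphs_M_def by auto
  have MN: "M + 1 \<le> n choose 2"
  proof -
    have "card (insert b x) \<le> card (all_edges n)" using xE bE fin_E by (intro card_mono) auto
    then show ?thesis using cx bx fx card_E by simp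
  qed
  have pn: "?p \<ge> 0"
  proof -
    have "real M \<le> real (n choose 2)" using MN by simp
    then have "real M * (real (n choose 2) - real M) \<ge> 0" by simp
    then show ?thesis unfolding pp_def by simp
  qed
  note kl1 = kl[OF x y xy yx] and kl2 = kl[OF y x yx xy]
  define T where "T u = (if u \<in> nb n M y then u else insert b (u - {a}))" for u
  define T' where "T' v = (if v \<in> nb n M x then v else insert a (v - {b}))" for v
  have T_in: "T u \<in> nb n M y" if "u \<in> nb n M x" for u
    using kl1[OF that] unfolding T_def by auto
  have T'_in: "T' v \<in> nb n M x" if "v \<in> nb n M y" for v
    using kl2[OF that] unfolding T'_def by auto
  have TT: "T' (T u) = u" if u: "u \<in> nb n M x" for u
  proof (cases "u \<in> nb n M y")
    case True then show ?thesis unfolding T_def T'_def using u by simp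
  next
    case False
    note k = kl1[OF u False]
    have "insert a (insert b (u - {a}) - {b}) = u" using k ab
      by (intro set_eqI) (simp, metis)
    then show ?thesis unfolding T_def T'_def using False k by simp
  qed
  have TT': "T (T' v) = v" if v: "v \<in> nb n M y" for v
  proof (cases "v \<in> nb n M x")
    case True then show ?thesis unfolding T_def T'_def using v by simp
  next
    case False
    note k = kl2[OF v False]
    have "insert b (insert a (v - {b}) - {a}) = v" using k ab
      by (intro set_eqI) (simp, metis)
    then show ?thesis unfolding T_def T'_def using False k by simp
  qed
  have bij: "bij_betw T (nb n M x) (nb n M y)"
    by (rule bij_betw_byWitness[where f' = T']) (use TT TT' T_in T'_in in auto)
  define A where "A u v = (if u \<in> nb n M x \<and> v = T u then ?p else 0)" for u v
  have finV': "finite ?V" by (rule finV)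
  have TV: "T u \<in> ?V" if "u \<in> nb n M x" for u using T_in[OF that] nb_sub by blast
  have rowA: "(\<Sum>v\<in>?V. A u v) = (if u \<in> nb n M x then ?p else 0)" for u
    unfolding A_def using TV finV' by (cases "u \<in> nb n M x") (simp_all add: sum.delta)
  have colA: "(\<Sum>u\<in>?V. A u v) = (if v \<in> nb n M y then ?p else 0)" for v
  proof -
    have "(\<Sum>u\<in>?V. A u v) = (\<Sum>u\<in>?V. if u \<in> nb n M x then (if v = T u then ?p else 0) else 0)"
      unfolding A_def by (intro sum.cong) auto
    also have "\<dots> = (\<Sum>u\<in>nb n M x. if v = T u then ?p else 0)"
      by (rule restrict_sum[OF finV' nb_sub])
    also have "\<dots> = (\<Sum>w\<in>nb n M y. if v = w then ?p else 0)"
      by (rule sum.reindex_bij_betw[OF bij, of "\<lambda>w. if v = w then ?p else 0"])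
    also have "\<dots> = (if v \<in> nb n M y then ?p else 0)"
      using finite_subset[OF nb_sub finV'] by simp
    finally show ?thesis .
  qed
  have Acoup: "A \<in> couplings ?V (switch_walk n M x) (switch_walk n M y)"
    unfolding couplings_def using pn rowA colA sw_eq by (auto simp: A_def)
  have "ccost ?V dd A = (\<Sum>u\<in>?V. if u \<in> nb n M x then ?p * dd u (T u) else 0)"
    unfolding ccost_def
  proof (intro sum.cong refl)
    fix u assume "u \<in> ?V"
    have ifm: "\<And>P c d. (if P then c else 0) * d = (if P then c * d else (0::real))" by simp
    show "(\<Sum>v\<in>?V. A u v * dd u v) = (if u \<in> nb n M x then ?p * dd u (T u) else 0)"
      unfolding A_def using TV finV' by (cases "u \<in> nb n M x") (simp_all add: ifm sum.delta)
  qed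
  also have "\<dots> = (\<Sum>u\<in>nb n M x. ?p * dd u (T u))"
    by (rule restrict_sum[OF finV' nb_sub])
  also have "\<dots> \<le> (\<Sum>u\<in>nb n M x. if u \<in> - nb n M y then ?p else 0)"
  proof (intro sum_mono)
    fix u assume u: "u \<in> nb n M x"
    show "?p * dd u (T u) \<le> (if u \<in> - nb n M y then ?p else 0)"
    proof (cases "u \<in> nb n M y")
      case True then show ?thesis unfolding T_def dd_def by simp
    next
      case False
      have fu: "finite u" using u nb_sub finG by blast
      have "u - insert b (u - {a}) \<subseteq> {a}" by blast
      then have "card (u - insert b (u - {a})) \<le> 1"
        using card_mono[of "{a}"] by fastforce
      then have "dd u (T u) \<le> 1" unfolding T_def dd_def using False by simp
      then show ?thesis using False pn by (simp add: mult_left_le)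
    qed
  qed
  also have "\<dots> = real (card (nb n M x - nb n M y)) * ?p"
    using sum.inter_restrict[OF finite_subset[OF nb_sub finV'], where g = "\<lambda>_. ?p" and B = "- nb n M y", symmetric]
    by (simp add: Diff_eq)
  also have "\<dots> \<le> real ((M - 1) * ((n choose 2) - (M + 1))) * ?p"
  proof (intro mult_right_mono pn)
    let ?g = "\<lambda>(e, f). insert f (x - {e})"
    have sub: "nb n M x - nb n M y \<subseteq> ?g ` ((x - {a}) \<times> (all_edges n - insert b x))"
    proof
      fix u assume "u \<in> nb n M x - nb n M y"
      then obtain e f where "e \<in> x" "e \<noteq> a" "f \<in> all_edges n - insert b x" "u = insert f (x - {e})"
        using kl1 by blast
      then show "u \<in> ?g ` ((x - {a}) \<times> (all_edges n - insert b x))" by force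
    qed
    have fin2: "finite ((x - {a}) \<times> (all_edges n - insert b x))" using fx fin_E by simp
    have "card (nb n M x - nb n M y) \<le> card (?g ` ((x - {a}) \<times> (all_edges n - insert b x)))"
      by (rule card_mono[OF finite_imageI[OF fin2] sub])
    also have "\<dots> \<le> card ((x - {a}) \<times> (all_edges n - insert b x))" by (rule card_image_le[OF fin2])
    also have "\<dots> = (M - 1) * ((n choose 2) - (M + 1))"
    proof -
      have "card (x - {a}) = M - 1" using cx ax fx by simp
      moreover have "card (all_edges n - insert b x) = (n choose 2) - (M + 1)"
        using card_Diff_subset[of "insert b x" "all_edges n"] xE bE fx bx cx card_E by simp
      ultimately show ?thesis by (simp add: card_cartesian_product)
    qed
    finally show "real (card (nb n M x - nb n M y)) \<le> real ((M - 1) * ((n choose 2) - (M + 1)))"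
      by linarith
  qed
  finally show ?thesis using Acoup by blast
qed



lemma dd_tri:
  assumes "x \<in> graphs_M n M" "y \<in> graphs_M n M" "z \<in> graphs_M n M"
  shows "dd x z \<le> dd x y + dd y z"
proof -
  have f: "finite x" "finite y" using assms finG by auto
  have "card (x - z) \<le> card ((x - y) \<union> (y - z))"
    using f by (intro card_mono) auto
  also have "\<dots> \<le> card (x - y) + card (y - z)" by (rule card_Un_le)
  finally show ?thesis unfolding dd_def by linarith
qed

lemma sw_nonneg: "M \<le> n choose 2 \<Longrightarrow> switch_walk n M x u \<ge> 0"
  unfolding switch_walk_def by simp

lemma eq_of_card0:
  assumes x: "x \<in> graphs_M n M" and y: "y \<in> graphs_M n M" and c: "card (x - y) = 0"
  shows "x = y"
proof -
  have "x \<subseteq> y" using finG[OF x] c by (metis Diff_eq_empty_iff card_0_eq finite_Diff)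
  moreover have "card x = card y" using x y unfolding graphs_M_def by auto
  ultimately show "x = y" using finG[OF y] by (simp add: card_subset_eq)
qed

lemma id_coupling:
  assumes "M \<le> n choose 2"
  shows "(\<lambda>u v. if u = v then switch_walk n M x u else 0)
           \<in> couplings (graphs_M n M) (switch_walk n M x) (switch_walk n M x)"
  unfolding couplings_def using sw_nonneg[OF assms] finV by (auto simp: sum.delta sum.delta')

lemma id_cost: "ccost (graphs_M n M) dd (\<lambda>u v. if u = v then switch_walk n M x u else 0) = 0"
  unfolding ccost_def dd_def by (intro sum.neutral ballI) auto

lemma ind:
  assumes MN: "M + 1 \<le> n choose 2"
  shows "x \<in> graphs_M n M \<Longrightarrow> y \<in> graphs_M n M \<Longrightarrow> card (x - y) = k \<Longrightarrow>
    \<exists>A\<in>couplings (graphs_M n M) (switch_walk n M x) (switch_walk n M y).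
       ccost (graphs_M n M) dd A \<le> real k * (real ((M - 1) * ((n choose 2) - (M + 1))) * pp n M)"
proof (induction k arbitrary: x)
  case 0
  then have "x = y" using eq_of_card0 by blast
  then show ?case using id_coupling[of M n x] id_cost[of n M x] MN
    by (intro bexI[of _ "\<lambda>u v. if u = v then switch_walk n M x u else 0"]) auto
next
  case (Suc k)
  from step[OF Suc.prems] obtain a b where
    h: "insert b (x - {a}) \<in> graphs_M n M"
       "card (insert b (x - {a}) - y) = k" "card (x - insert b (x - {a})) = 1" by blast
  obtain A1 where A1: "A1 \<in> couplings (graphs_M n M) (switch_walk n M x) (switch_walk n M (insert b (x - {a})))"
    "ccost (graphs_M n M) dd A1 \<le> real ((M - 1) * ((n choose 2) - (M + 1))) * pp n M"
    using adj_coupling[OF Suc.prems(1) h(1) h(3)] by blast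
  obtain A2 where A2: "A2 \<in> couplings (graphs_M n M) (switch_walk n M (insert b (x - {a}))) (switch_walk n M y)"
    "ccost (graphs_M n M) dd A2 \<le> real k * (real ((M - 1) * ((n choose 2) - (M + 1))) * pp n M)"
    using Suc.IH[OF h(1) Suc.prems(2) h(2)] by blast
  obtain C where C: "C \<in> couplings (graphs_M n M) (switch_walk n M x) (switch_walk n M y)"
    "ccost (graphs_M n M) dd C \<le> ccost (graphs_M n M) dd A1 + ccost (graphs_M n M) dd A2"
    using glue[OF finV A1(1) A2(1), of dd] dd_tri by blast
  show ?case using C A1(2) A2(2) by (intro bexI[OF _ C(1)]) (simp add: algebra_simps)
qed

theorem mainTheorem6:
  fixes n M :: nat
  assumes "n \<ge> 2" and "1 \<le> M" and "M \<le> (n choose 2) - 1"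
    and "G1 \<in> graphs_M n M" and "G2 \<in> graphs_M n M" and "G1 \<noteq> G2"
  shows "ollivier_ricci (graphs_M n M) (switch_adj n) (switch_walk n M) G1 G2
           \<ge> real (n choose 2) / (real M * (real (n choose 2) - real M) + 1)"
proof -
  let ?V = "graphs_M n M" and ?N = "n choose 2"
  have MN: "M + 1 \<le> ?N" using assms(2,3) by linarith
  define k where "k = card (G1 - G2)"
  have k1: "k \<ge> 1" using eq_of_card0[OF assms(4,5)] assms(6) unfolding k_def by fastforce
  define c where "c = real ((M - 1) * (?N - (M + 1))) * pp n M"
  obtain C where C: "C \<in> couplings ?V (switch_walk n M G1) (switch_walk n M G2)"
    "ccost ?V dd C \<le> real k * c"
    using ind[OF MN assms(4,5) k_def[symmetric]] unfolding c_def by blast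
  define f where "f A = (\<Sum>x\<in>?V. \<Sum>y\<in>?V. A x y * real (gdist ?V (switch_adj n) x y))" for A
  have fC: "f C = ccost ?V dd C"
    unfolding f_def ccost_def dd_def using gdist_eq by (intro sum.cong refl) simp
  have bdd: "bdd_below (f ` couplings ?V (switch_walk n M G1) (switch_walk n M G2))"
  proof (rule bdd_belowI[of _ 0])
    fix t assume "t \<in> f ` couplings ?V (switch_walk n M G1) (switch_walk n M G2)"
    then obtain A where A: "A \<in> couplings ?V (switch_walk n M G1) (switch_walk n M G2)" "t = f A" by blast
    then show "0 \<le> t" unfolding f_def couplings_def by (auto intro!: sum_nonneg)
  qed
  have W: "transport_dist ?V (switch_adj n) (switch_walk n M G1) (switch_walk n M G2) \<le> real k * c"
    unfolding transport_dist_def f_def[symmetric]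
    using cInf_lower[OF imageI[OF C(1)] bdd] fC C(2) by linarith
  have gd: "gdist ?V (switch_adj n) G1 G2 = k" using gdist_eq[OF assms(4,5)] k_def by simp
  have kpos: "real k > 0" using k1 by simp
  have "transport_dist ?V (switch_adj n) (switch_walk n M G1) (switch_walk n M G2) / real k \<le> c"
    using W kpos by (simp add: divide_le_eq mult.commute)
  then have "ollivier_ricci ?V (switch_adj n) (switch_walk n M) G1 G2 \<ge> 1 - c"
    unfolding ollivier_ricci_def gd by linarith
  moreover have "1 - c = real ?N / (real M * (real ?N - real M) + 1)"
  proof -
    have e: "real ((M - 1) * (?N - (M + 1))) = (real M - 1) * (real ?N - real M - 1)"
      using assms(2) MN by (simp add: of_nat_diff)
    have pos: "real M * (real ?N - real M) + 1 > 0"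
    proof -
      have "real M \<le> real ?N" using MN by simp
      then have "real M * (real ?N - real M) \<ge> 0" by simp
      then show ?thesis by simp
    qed
    show ?thesis unfolding c_def pp_def e using pos by (simp add: field_simps)
  qed
  ultimately show ?thesis by simp
qed

end
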